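(* Let $s\geq1$, let $(g_{\mu\nu})_{0\le\mu,\nu\le s}$ be a real symmetric invertible matrix with inverse $(g^{\mu\nu})$, and let $\mathcal{A}^!$ be the unital associative $\mathbb{C}$-algebra generated by $\theta^0,\dots,\theta^s$ with relations \[ \theta^\lambda\theta^\mu\theta^\nu=\frac{1}{s}\left(g^{\lambda\mu}\theta^\nu+g^{\mu\nu}\theta^\lambda-2g^{\lambda\nu}\theta^\mu\right)\mathbf{g},\qquad \lambda,\mu,\nu\in\{0,\dots,s\}, \] where $\mathbf{g}=\sum_{\alpha,\beta}g_{\alpha\beta}\theta^\alpha\theta^\beta$, graded by $\deg\theta^\lambda=1$. Then $\mathcal{A}^!_0=\mathbb{C}1$, $\mathcal{A}^!_1=\bigoplus_\lambda\mathbb{C}\theta^\lambda$, $\mathcal{A}^!_2=\bigoplus_{\mu,\nu}\mathbb{C}\theta^\mu\theta^\nu$, $\mathcal{A}^!_3=\bigoplus_\lambda\mathbb{C}\theta^\lambda\mathbf{g}$, $\mathcal{A}^!_4=\mathbb{C}\mathbf{g}^2$, and $\mathcal{A}^!_n=0$ for $n\geq5$. In particular $\dim\mathcal{A}^!_0=\dim\mathcal{A}^!_4=1$, $\dim\mathcal{A}^!_1=\dim\mathcal{A}^!_3=s+1$, $\dim\mathcal{A}^!_2=(s+1)^2$.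
   Context: $\mathcal{A}^!$ is the dual 3-homogeneous algebra $T(E^* )/(R^\perp)$ of the cubic Yang–Mills algebra $T(E)/(R)$ (generated by $\nabla_0,\dots,\nabla_s$ with relations $\sum_{\lambda,\mu}g^{\lambda\mu}[\nabla_\lambda,[\nabla_\mu,\nabla_\nu]]=0$), where $(\theta^\lambda)$ is the dual basis of $(\nabla_\lambda)$ and $R^\perp\subset E^{*\otimes3}$ is the annihilator of $R$; the displayed relations are its defining relations. *)

theory Defs
  imports Complex_Main "HOL-Library.Function_Algebras"
begin

text \<open>Noncommutative polynomials (elements of the tensor algebra T(E*)) are represented
  by their coefficient functions on words; generator \<open>\<theta>\<^sup>\<lambda>\<close> is the letter \<open>\<lambda>\<close>.\<close>

type_synonym ncpoly = "nat list \<Rightarrow> complex"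

definition cscale :: "complex \<Rightarrow> ncpoly \<Rightarrow> ncpoly" where
  "cscale c p = (\<lambda>w. c * p w)"

lemma vector_space_cscale: "vector_space cscale"
  by unfold_locales (auto simp: cscale_def fun_eq_iff algebra_simps)

interpretation nc: vector_space cscale
  by (rule vector_space_cscale)

definition mono :: "nat list \<Rightarrow> ncpoly" where
  "mono u = (\<lambda>w. if w = u then 1 else 0)"

definition ncmult :: "ncpoly \<Rightarrow> ncpoly \<Rightarrow> ncpoly" (infixl "**" 70) where
  "p ** q = (\<lambda>w. \<Sum>k\<le>length w. p (take k w) * q (drop k w))"

definition ncone :: ncpoly where "ncone = mono []"

definition theta :: "nat \<Rightarrow> ncpoly" where "theta l = mono [l]"

definition gel :: "nat \<Rightarrow> (nat \<Rightarrow> nat \<Rightarrow> real) \<Rightarrow> ncpoly" where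
  "gel s G = (\<Sum>\<alpha>\<le>s. \<Sum>\<beta>\<le>s. cscale (complex_of_real (G \<alpha> \<beta>)) (theta \<alpha> ** theta \<beta>))"

text \<open>The defining relation (lhs minus rhs), with \<open>Gi\<close> the inverse matrix \<open>g\<^sup>\<mu>\<^sup>\<nu>\<close>.\<close>
definition rel :: "nat \<Rightarrow> (nat \<Rightarrow> nat \<Rightarrow> real) \<Rightarrow> (nat \<Rightarrow> nat \<Rightarrow> real) \<Rightarrow> nat \<Rightarrow> nat \<Rightarrow> nat \<Rightarrow> ncpoly" where
  "rel s G Gi l m n =
     theta l ** theta m ** theta n
     - cscale (1 / of_nat s)
         ((cscale (complex_of_real (Gi l m)) (theta n)
           + cscale (complex_of_real (Gi m n)) (theta l)
           - cscale (2 * complex_of_real (Gi l n)) (theta m)) ** gel s G)"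

definition relideal :: "nat \<Rightarrow> (nat \<Rightarrow> nat \<Rightarrow> real) \<Rightarrow> (nat \<Rightarrow> nat \<Rightarrow> real) \<Rightarrow> ncpoly set" where
  "relideal s G Gi = nc.span {mono u ** rel s G Gi l m n ** mono v | u v l m n.
      set u \<subseteq> {..s} \<and> set v \<subseteq> {..s} \<and> l \<le> s \<and> m \<le> s \<and> n \<le> s}"

definition homog :: "nat \<Rightarrow> nat \<Rightarrow> ncpoly set" where
  "homog s n = {p. \<forall>w. p w \<noteq> 0 \<longrightarrow> length w = n \<and> set w \<subseteq> {..s}}"

text \<open>\<open>f\<close> restricted to \<open>B\<close> induces a basis of \<open>\<A>\<^sup>!\<^sub>n = T\<^sub>n / (I \<inter> T\<^sub>n)\<close>.\<close>
definition basis_mod :: "nat \<Rightarrow> (nat \<Rightarrow> nat \<Rightarrow> real) \<Rightarrow> (nat \<Rightarrow> nat \<Rightarrow> real) \<Rightarrow> nat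
    \<Rightarrow> 'i set \<Rightarrow> ('i \<Rightarrow> ncpoly) \<Rightarrow> bool" where
  "basis_mod s G Gi n B f \<longleftrightarrow>
     finite B \<and> f ` B \<subseteq> homog s n \<and>
     homog s n \<subseteq> nc.span (f ` B \<union> (relideal s G Gi \<inter> homog s n)) \<and>
     (\<forall>c. (\<Sum>i\<in>B. cscale (c i) (f i)) \<in> relideal s G Gi \<longrightarrow> (\<forall>i\<in>B. c i = 0))"

text \<open>Dimension of \<open>\<A>\<^sup>!\<^sub>n = T\<^sub>n / (I \<inter> T\<^sub>n)\<close>.\<close>
definition dimA :: "nat \<Rightarrow> (nat \<Rightarrow> nat \<Rightarrow> real) \<Rightarrow> (nat \<Rightarrow> nat \<Rightarrow> real) \<Rightarrow> nat \<Rightarrow> nat" where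
  "dimA s G Gi n = nc.dim (homog s n) - nc.dim (relideal s G Gi \<inter> homog s n)"

end

theory Submission
  imports Defs
begin

lemma sum_fun_apply: "(\<Sum>i\<in>A. f i) w = (\<Sum>i\<in>A. (f i :: ncpoly) w)"
  by (induct A rule: infinite_finite_induct) auto

lemma cscale_apply[simp]: "cscale c p w = c * p w"
  by (simp add: cscale_def)

lemma ncmult_apply: "(p ** q) w = (\<Sum>k\<le>length w. p (take k w) * q (drop k w))"
  by (simp add: ncmult_def)

lemma ncmult_add_left: "(p + q) ** r = p ** r + q ** r"
  by (simp add: ncmult_def fun_eq_iff sum.distrib distrib_right)
lemma ncmult_add_right: "r ** (p + q) = r ** p + r ** q"
  by (simp add: ncmult_def fun_eq_iff sum.distrib distrib_left)
lemma ncmult_diff_left: "(p - q) ** r = p ** r - q ** r"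
  by (simp add: ncmult_def fun_eq_iff sum_subtractf left_diff_distrib)
lemma ncmult_diff_right: "r ** (p - q) = r ** p - r ** q"
  by (simp add: ncmult_def fun_eq_iff sum_subtractf right_diff_distrib)
lemma ncmult_scale_left: "cscale c p ** r = cscale c (p ** r)"
  by (simp add: ncmult_def fun_eq_iff sum_distrib_left mult.assoc)
lemma ncmult_scale_right: "r ** cscale c p = cscale c (r ** p)"
  by (simp add: ncmult_def fun_eq_iff sum_distrib_left mult.left_commute)
lemma ncmult_zero_left[simp]: "0 ** r = 0"
  by (simp add: ncmult_def fun_eq_iff)
lemma ncmult_zero_right[simp]: "r ** 0 = 0"
  by (simp add: ncmult_def fun_eq_iff)
lemma ncmult_sum_left: "(\<Sum>i\<in>A. f i) ** r = (\<Sum>i\<in>A. f i ** r)"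
  by (simp add: fun_eq_iff ncmult_apply sum_fun_apply sum_distrib_right) (simp add: sum.swap[of _ _ A])
lemma ncmult_sum_right: "r ** (\<Sum>i\<in>A. f i) = (\<Sum>i\<in>A. r ** f i)"
  by (simp add: fun_eq_iff ncmult_apply sum_fun_apply sum_distrib_left) (simp add: sum.swap[of _ _ A])

lemma ncmult_assoc: "(p ** q) ** r = p ** (q ** r)"
proof (rule ext)
  fix w :: "nat list"
  define n where "n = length w"
  define F where "F = (\<lambda>j i. p (take j w) * q (take i (drop j w)) * r (drop (j + i) w))"
  have "((p ** q) ** r) w = (\<Sum>k\<le>n. \<Sum>j\<le>k. F j (k - j))"
    unfolding ncmult_apply n_def F_def
    by (auto simp: sum_distrib_right min_def drop_take intro!: sum.cong)
  also have "\<dots> = (\<Sum>(j,i)\<in>{(j,i). j + i \<le> n}. F j i)"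
    by (rule sum.triangle_reindex_eq[symmetric])
  also have "{(j,i). j + i \<le> n} = Sigma {..n} (\<lambda>j. {..n - j})"
    by auto
  also have "(\<Sum>(j,i)\<in>Sigma {..n} (\<lambda>j. {..n - j}). F j i) = (\<Sum>j\<le>n. \<Sum>i\<le>n-j. F j i)"
    by (rule sum.Sigma[symmetric]) auto
  also have "\<dots> = (p ** (q ** r)) w"
    unfolding ncmult_apply n_def F_def
    by (auto simp: sum_distrib_left mult.assoc add.commute intro!: sum.cong)
  finally show "((p ** q) ** r) w = (p ** (q ** r)) w" .
qed

lemma ncmult_lenhom:
  assumes "\<forall>v. p v \<noteq> 0 \<longrightarrow> length v = k"
  shows "(p ** q) w = (if k \<le> length w then p (take k w) * q (drop k w) else 0)"
proof -
  have "(p ** q) w = (\<Sum>j\<le>length w. if j = k then p (take k w) * q (drop k w) else 0)"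
    unfolding ncmult_apply
  proof (rule sum.cong)
    fix j assume j: "j \<in> {..length w}"
    show "p (take j w) * q (drop j w) = (if j = k then p (take k w) * q (drop k w) else 0)"
    proof (cases "j = k")
      case False
      have "length (take j w) = j" using j by simp
      then have "p (take j w) = 0" using assms False by metis
      then show ?thesis using False by simp
    qed simp
  qed simp
  then show ?thesis by simp
qed

lemma mono_mult: "mono u ** mono v = mono (u @ v)"
proof (rule ext)
  fix w
  have h: "\<forall>x. mono u x \<noteq> 0 \<longrightarrow> length x = length u" by (simp add: mono_def)
  show "(mono u ** mono v) w = mono (u @ v) w"
    unfolding ncmult_lenhom[OF h]
    by (auto simp: mono_def append_eq_conv_conj) (metis append_take_drop_id)
qed

definition words :: "nat \<Rightarrow> nat \<Rightarrow> nat list set" where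
  "words s n = {w. length w = n \<and> set w \<subseteq> {..s}}"

lemma finite_words[simp]: "finite (words s n)"
proof -
  have "words s n = {xs. set xs \<subseteq> {..s} \<and> length xs = n}" by (auto simp: words_def)
  then show ?thesis using finite_lists_length_eq[of "{..s}" n] by simp
qed

lemma homog_iff: "p \<in> homog s n \<longleftrightarrow> (\<forall>w. w \<notin> words s n \<longrightarrow> p w = 0)"
  by (auto simp: homog_def words_def)

lemma homog_expand:
  assumes "p \<in> homog s n"
  shows "p = (\<Sum>w\<in>words s n. cscale (p w) (mono w))"
proof (rule ext)
  fix v
  have "(\<Sum>w\<in>words s n. cscale (p w) (mono w)) v = (\<Sum>w\<in>words s n. if v = w then p v else 0)"
    unfolding sum_fun_apply by (rule sum.cong) (auto simp: mono_def)
  also have "\<dots> = p v" using assms by (auto simp: homog_iff)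
  finally show "p v = (\<Sum>w\<in>words s n. cscale (p w) (mono w)) v" ..
qed

lemma mono_homog: "w \<in> words s n \<Longrightarrow> mono w \<in> homog s n"
  by (auto simp: homog_iff mono_def)

lemma homog_subspace: "nc.subspace (homog s n)"
  by (auto simp: nc.subspace_def homog_iff)

lemma homog_span: "homog s n \<subseteq> nc.span (mono ` words s n)"
proof
  fix p assume p: "p \<in> homog s n"
  show "p \<in> nc.span (mono ` words s n)"
    by (subst homog_expand[OF p]) (intro nc.span_sum nc.span_scale nc.span_base; auto)
qed

lemma homog_add: "p \<in> homog s n \<Longrightarrow> q \<in> homog s n \<Longrightarrow> p + q \<in> homog s n"
  by (auto simp: homog_iff)
lemma homog_diff: "p \<in> homog s n \<Longrightarrow> q \<in> homog s n \<Longrightarrow> p - q \<in> homog s n"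
  by (auto simp: homog_iff)
lemma homog_scale: "p \<in> homog s n \<Longrightarrow> cscale c p \<in> homog s n"
  by (auto simp: homog_iff)
lemma homog_sum: "(\<And>i. i \<in> A \<Longrightarrow> f i \<in> homog s n) \<Longrightarrow> sum f A \<in> homog s n"
  by (induct A rule: infinite_finite_induct) (auto simp: homog_iff)

lemma homog_lenhom: "p \<in> homog s n \<Longrightarrow> \<forall>v. p v \<noteq> 0 \<longrightarrow> length v = n"
  by (auto simp: homog_def)

lemma homog_mult: 
  assumes "p \<in> homog s a" "q \<in> homog s b"
  shows "p ** q \<in> homog s (a + b)"
  unfolding homog_def
proof (intro CollectI allI impI)
  fix w assume nz: "(p ** q) w \<noteq> 0"
  then have h: "a \<le> length w" "p (take a w) \<noteq> 0" "q (drop a w) \<noteq> 0"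
    unfolding ncmult_lenhom[OF homog_lenhom[OF assms(1)]] by (auto split: if_splits)
  then have "length (drop a w) = b" "set (drop a w) \<subseteq> {..s}" "set (take a w) \<subseteq> {..s}"
    using assms by (auto simp: homog_def)
  moreover have "set w = set (take a w) \<union> set (drop a w)"
    by (metis append_take_drop_id set_append)
  ultimately show "length w = a + b \<and> set w \<subseteq> {..s}" using h by auto
qed

lemma theta_homog: "l \<le> s \<Longrightarrow> theta l \<in> homog s 1"
  by (auto simp: theta_def intro!: mono_homog simp: words_def)

lemma gel_homog: "gel s G \<in> homog s 2"
  unfolding gel_def
  by (intro homog_sum homog_scale) (metis one_add_one homog_mult theta_homog atMost_iff)

lemma mono_homog': "set u \<subseteq> {..s} \<Longrightarrow> mono u \<in> homog s (length u)"
  by (rule mono_homog) (simp add: words_def)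

lemma rel_homog:
  assumes "l \<le> s" "m \<le> s" "n \<le> s"
  shows "rel s G Gi l m n \<in> homog s 3"
proof -
  have t: "theta x \<in> homog s 1" if "x \<in> {l,m,n}" for x using that assms theta_homog by auto
  have a: "theta l ** theta m ** theta n \<in> homog s 3"
    using homog_mult[OF homog_mult[OF t t] t, of l m n] by (simp add: numeral_3_eq_3)
  have b: "(cscale (complex_of_real (Gi l m)) (theta n)
           + cscale (complex_of_real (Gi m n)) (theta l)
           - cscale (2 * complex_of_real (Gi l n)) (theta m)) \<in> homog s 1"
    by (intro homog_add homog_diff homog_scale t) auto
  show ?thesis unfolding rel_def
    using homog_mult[OF b gel_homog] a
    by (intro homog_diff homog_scale) (auto simp: numeral_3_eq_3)
qed

definition gens :: "nat \<Rightarrow> (nat \<Rightarrow> nat \<Rightarrow> real) \<Rightarrow> (nat \<Rightarrow> nat \<Rightarrow> real) \<Rightarrow> ncpoly set" where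
  "gens s G Gi = {mono u ** rel s G Gi l m n ** mono v | u v l m n.
      set u \<subseteq> {..s} \<and> set v \<subseteq> {..s} \<and> l \<le> s \<and> m \<le> s \<and> n \<le> s}"

lemma relideal_gens: "relideal s G Gi = nc.span (gens s G Gi)"
  by (simp add: relideal_def gens_def)

lemma gens_homog:
  assumes "x \<in> gens s G Gi"
  shows "\<exists>d\<ge>3. x \<in> homog s d"
proof -
  from assms obtain u v l m n where x: "x = mono u ** rel s G Gi l m n ** mono v"
    and h: "set u \<subseteq> {..s}" "set v \<subseteq> {..s}" "l \<le> s" "m \<le> s" "n \<le> s"
    unfolding gens_def by blast
  have "x \<in> homog s (length u + 3 + length v)"
    unfolding x by (intro homog_mult mono_homog' rel_homog h)
  then show ?thesis by (intro exI[of _ "length u + 3 + length v"]) auto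
qed

lemma functional_vanish:
  assumes add: "\<And>p q. \<phi> (p + q) = \<phi> p + \<phi> q"
    and sc: "\<And>c p. \<phi> (cscale c p) = c * \<phi> p"
    and S: "\<And>x. x \<in> S \<Longrightarrow> \<phi> x = 0"
    and x: "x \<in> nc.span S"
  shows "\<phi> x = 0"
  using x
proof (induct rule: nc.span_induct)
  case base
  have "cscale 0 0 = (0::ncpoly)" by (simp add: fun_eq_iff)
  then have z: "\<phi> 0 = 0" using sc[of 0 0] by simp
  show ?case
    by (auto simp: nc.subspace_def z add sc)
next
  case (step x) then show ?case using S by simp
qed

definition wfun :: "nat list set \<Rightarrow> (nat list \<Rightarrow> complex) \<Rightarrow> ncpoly \<Rightarrow> complex" where
  "wfun W a p = (\<Sum>w\<in>W. a w * p w)"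

lemma wfun_add: "wfun W a (p + q) = wfun W a p + wfun W a q"
  by (simp add: wfun_def distrib_left sum.distrib)
lemma wfun_scale: "wfun W a (cscale c p) = c * wfun W a p"
  by (simp add: wfun_def sum_distrib_left mult_ac)

lemma wfun_vanish:
  assumes W: "W \<subseteq> words s n"
    and gn: "\<And>x. x \<in> gens s G Gi \<Longrightarrow> x \<in> homog s n \<Longrightarrow> wfun W a x = 0"
    and x: "x \<in> relideal s G Gi"
  shows "wfun W a x = 0"
proof (rule functional_vanish[OF wfun_add wfun_scale _ x[unfolded relideal_gens]])
  fix y assume y: "y \<in> gens s G Gi"
  then obtain d where d: "d \<ge> 3" "y \<in> homog s d" using gens_homog by blast
  show "wfun W a y = 0"
  proof (cases "d = n")
    case True then show ?thesis using gn y d by simp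
  next
    case False
    have "y w = 0" if "w \<in> W" for w
      using that W d False by (auto simp: homog_def words_def)
    then show ?thesis by (simp add: wfun_def)
  qed
qed

lemma wfun_zero: "wfun W a 0 = 0" by (simp add: wfun_def)

lemma wfun_sum: "wfun W a (\<Sum>i\<in>B. g i) = (\<Sum>i\<in>B. wfun W a (g i))"
  unfolding wfun_def sum_fun_apply sum_distrib_left by (rule sum.swap)

lemma indep_functionals:
  assumes finB: "finite B" and F: "\<And>j. j \<in> B \<Longrightarrow> \<exists>W a. W \<subseteq> words s n \<and>
      (\<forall>x. x \<in> gens s G Gi \<longrightarrow> x \<in> homog s n \<longrightarrow> wfun W a x = 0) \<and>
      (\<forall>i\<in>B. wfun W a (f i) = (if i = j then 1 else 0))"
  shows "\<forall>c. (\<Sum>i\<in>B. cscale (c i) (f i)) \<in> relideal s G Gi \<longrightarrow> (\<forall>i\<in>B. c i = 0)"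
proof (intro allI impI ballI)
  fix c j assume I: "(\<Sum>i\<in>B. cscale (c i) (f i)) \<in> relideal s G Gi" and j: "j \<in> B"
  obtain W a where W: "W \<subseteq> words s n"
    and g: "\<forall>x. x \<in> gens s G Gi \<longrightarrow> x \<in> homog s n \<longrightarrow> wfun W a x = 0"
    and d: "\<forall>i\<in>B. wfun W a (f i) = (if i = j then 1 else 0)"
    using F[OF j] by blast
  have "0 = wfun W a (\<Sum>i\<in>B. cscale (c i) (f i))"
    using wfun_vanish[OF W _ I] g by metis
  also have "\<dots> = (\<Sum>i\<in>B. c i * (if i = j then 1 else 0))"
    unfolding wfun_sum wfun_scale using d by (intro sum.cong) auto
  also have "\<dots> = c j" using j finB by (simp add: if_distrib sum.delta cong: if_cong)
  finally show "c j = 0" by simp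
qed

lemma span_homog: "nc.span (homog s n) = homog s n"
  by (rule nc.span_subspace) (auto intro: nc.span_base homog_subspace)

lemma span_helper:
  assumes fB: "f ` B \<subseteq> homog s n"
    and red: "\<And>w. w \<in> words s n \<Longrightarrow> \<exists>x \<in> nc.span (f ` B). mono w - x \<in> relideal s G Gi"
  shows "homog s n \<subseteq> nc.span (f ` B \<union> (relideal s G Gi \<inter> homog s n))"
proof -
  let ?T = "nc.span (f ` B \<union> (relideal s G Gi \<inter> homog s n))"
  have sfB: "nc.span (f ` B) \<subseteq> homog s n"
    using nc.span_mono[OF fB] span_homog by blast
  have "mono w \<in> ?T" if w: "w \<in> words s n" for w
  proof -
    obtain x where x: "x \<in> nc.span (f ` B)" "mono w - x \<in> relideal s G Gi" using red[OF w] by blast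
    have xh: "x \<in> homog s n" using x sfB by blast
    have "mono w - x \<in> homog s n" using homog_diff[OF mono_homog[OF w] xh] .
    then have "mono w - x \<in> ?T" using x by (intro nc.span_base) auto
    moreover have "x \<in> ?T" using x nc.span_mono[of "f ` B" "f ` B \<union> (relideal s G Gi \<inter> homog s n)"] by blast
    ultimately have "x + (mono w - x) \<in> ?T" by (rule nc.span_add[rotated])
    then show ?thesis by simp
  qed
  then have "nc.span (mono ` words s n) \<subseteq> ?T"
    by (intro nc.span_minimal) auto
  then show ?thesis using homog_span by blast
qed

lemma relideal_subspace: "nc.subspace (relideal s G Gi)"
  by (simp add: relideal_def)

lemma dimA_card:
  assumes bm: "basis_mod s G Gi n B f"
  shows "dimA s G Gi n = card B"
proof -
  let ?H = "homog s n" and ?I = "relideal s G Gi"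
  let ?K = "?I \<inter> ?H"
  have finB: "finite B" and fB: "f ` B \<subseteq> ?H" and sp: "?H \<subseteq> nc.span (f ` B \<union> ?K)"
    and ind: "\<And>c. (\<Sum>i\<in>B. cscale (c i) (f i)) \<in> ?I \<Longrightarrow> (\<forall>i\<in>B. c i = 0)"
    using bm unfolding basis_mod_def by blast+
  obtain C where CK: "C \<subseteq> ?K" and Cind: "nc.independent C" and KC: "?K \<subseteq> nc.span C"
    and cardC: "card C = nc.dim ?K"
    using nc.basis_exists by blast
  have finW: "finite (mono ` words s n)" by simp
  have "C \<subseteq> nc.span (mono ` words s n)" using CK homog_span by blast
  then have finC: "finite C" using nc.independent_span_bound[OF finW Cind] by blast
  have CI: "C \<subseteq> ?I" using CK by blast
  have inj: "inj_on f B"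
  proof (rule inj_onI)
    fix i j assume ij: "i \<in> B" "j \<in> B" "f i = f j"
    show "i = j"
    proof (rule ccontr)
      assume ne: "i \<noteq> j"
      let ?c = "\<lambda>k. if k = i then 1 else if k = j then -1 else (0::complex)"
      have "(\<Sum>k\<in>B. cscale (?c k) (f k)) = (\<Sum>k\<in>B. (if k = i then f i else 0) + (if k = j then cscale (-1) (f j) else 0))"
        using ne by (intro sum.cong) (auto simp: fun_eq_iff)
      also have "\<dots> = f i + cscale (-1) (f j)" using ij finB by (simp add: sum.distrib)
      also have "\<dots> = 0" using ij by (simp add: fun_eq_iff)
      finally have "(\<Sum>k\<in>B. cscale (?c k) (f k)) \<in> ?I" by (simp add: nc.span_zero relideal_def)
      then show False using ind ij by fastforce
    qed
  qed
  have disj: "f ` B \<inter> C = {}"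
  proof (rule ccontr)
    assume "f ` B \<inter> C \<noteq> {}"
    then obtain i where i: "i \<in> B" "f i \<in> C" by blast
    let ?c = "\<lambda>k. if k = i then 1 else (0::complex)"
    have "(\<Sum>k\<in>B. cscale (?c k) (f k)) = (\<Sum>k\<in>B. if k = i then f i else 0)"
      by (intro sum.cong) (auto simp: fun_eq_iff)
    also have "\<dots> = f i" using i finB by simp
    finally have "(\<Sum>k\<in>B. cscale (?c k) (f k)) \<in> ?I" using i CI by auto
    then show False using ind i by fastforce
  qed
  let ?D = "f ` B \<union> C"
  have finD: "finite ?D" using finB finC by simp
  have Dind: "nc.independent ?D"
  proof (rule nc.independent_if_scalars_zero[OF finD])
    fix u x assume z: "(\<Sum>x\<in>?D. cscale (u x) x) = 0" and x: "x \<in> ?D"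
    have split: "(\<Sum>x\<in>?D. cscale (u x) x) = (\<Sum>x\<in>f ` B. cscale (u x) x) + (\<Sum>x\<in>C. cscale (u x) x)"
      by (rule sum.union_disjoint) (use finB finC disj in auto)
    have re: "(\<Sum>x\<in>f ` B. cscale (u x) x) = (\<Sum>i\<in>B. cscale (u (f i)) (f i))"
      by (rule sum.reindex[OF inj, unfolded comp_def])
    have sC: "(\<Sum>x\<in>C. cscale (u x) x) \<in> ?I"
      using CI unfolding relideal_gens by (intro nc.span_sum nc.span_scale) auto
    have "(\<Sum>i\<in>B. cscale (u (f i)) (f i)) = 0 - (\<Sum>x\<in>C. cscale (u x) x)"
      using z split re by (simp add: eq_neg_iff_add_eq_0)
    also have "\<dots> \<in> ?I" using sC by (simp add: relideal_def nc.span_neg)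
    finally have uB: "\<forall>i\<in>B. u (f i) = 0" using ind[of "\<lambda>i. u (f i)"] by blast
    then have "(\<Sum>x\<in>f ` B. cscale (u x) x) = 0" unfolding re by (simp add: fun_eq_iff)
    then have zC: "(\<Sum>x\<in>C. cscale (u x) x) = 0" using z split by simp
    show "u x = 0"
    proof (cases "x \<in> C")
      case True
      then show ?thesis using nc.independentD[OF Cind finC _ zC] by blast
    next
      case False then show ?thesis using x uB by auto
    qed
  qed
  have DH: "?D \<subseteq> ?H" using fB CK by blast
  have HD: "?H \<subseteq> nc.span ?D"
  proof -
    have "f ` B \<union> ?K \<subseteq> nc.span ?D"
      using KC nc.span_mono[of C ?D] nc.span_base[of _ ?D] by blast
    then have "nc.span (f ` B \<union> ?K) \<subseteq> nc.span ?D"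
      by (intro nc.span_minimal) auto
    then show ?thesis using sp by blast
  qed
  have "card ?D = nc.dim ?H" by (rule nc.basis_card_eq_dim[OF DH HD Dind])
  moreover have "card ?D = card B + card C"
    using card_Un_disjoint[OF _ finC disj] finB card_image[OF inj] by simp
  ultimately show ?thesis unfolding dimA_def using cardC by simp
qed

lemma ncone_left: "mono [] ** p = p"
proof (rule ext)
  fix w
  have h: "\<forall>v. mono [] v \<noteq> 0 \<longrightarrow> length v = 0" by (simp add: mono_def)
  show "(mono [] ** p) w = p w" unfolding ncmult_lenhom[OF h] by (simp add: mono_def)
qed

lemma ncone_right: "p ** mono [] = p"
proof (rule ext)
  fix w
  have "(p ** mono []) w = (\<Sum>k\<le>length w. if k = length w then p w else 0)"
    unfolding ncmult_apply by (rule sum.cong) (auto simp: mono_def)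
  then show "(p ** mono []) w = p w" by simp
qed

lemma cscale_sum: "cscale c (\<Sum>i\<in>A. f i) = (\<Sum>i\<in>A. cscale c (f i))"
  by (simp add: fun_eq_iff sum_fun_apply sum_distrib_left)

lemma I_left_mono:
  assumes x: "x \<in> relideal s G Gi" and u: "set u \<subseteq> {..s}"
  shows "mono u ** x \<in> relideal s G Gi"
  using x[unfolded relideal_gens]
proof (induct rule: nc.span_induct)
  case base
  show ?case
    unfolding nc.subspace_def mem_Collect_eq relideal_gens
    by (auto simp: ncmult_add_right ncmult_scale_right intro: nc.span_add nc.span_scale nc.span_zero)
next
  case (step y)
  then obtain u' v l m n where y: "y = mono u' ** rel s G Gi l m n ** mono v"
    and h: "set u' \<subseteq> {..s}" "set v \<subseteq> {..s}" "l \<le> s" "m \<le> s" "n \<le> s"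
    unfolding gens_def by blast
  have "mono u ** y = mono (u @ u') ** rel s G Gi l m n ** mono v"
    unfolding y by (simp add: ncmult_assoc mono_mult[symmetric])
  also have "\<dots> \<in> gens s G Gi" unfolding gens_def using h u
    by (intro CollectI exI[of _ "u @ u'"] exI[of _ v] exI[of _ l] exI[of _ m] exI[of _ n]) auto
  finally show ?case unfolding relideal_gens by (rule nc.span_base)
qed

lemma I_right_mono:
  assumes x: "x \<in> relideal s G Gi" and u: "set u \<subseteq> {..s}"
  shows "x ** mono u \<in> relideal s G Gi"
  using x[unfolded relideal_gens]
proof (induct rule: nc.span_induct)
  case base
  show ?case
    unfolding nc.subspace_def mem_Collect_eq relideal_gens
    by (auto simp: ncmult_add_left ncmult_scale_left intro: nc.span_add nc.span_scale nc.span_zero)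
next
  case (step y)
  then obtain u' v l m n where y: "y = mono u' ** rel s G Gi l m n ** mono v"
    and h: "set u' \<subseteq> {..s}" "set v \<subseteq> {..s}" "l \<le> s" "m \<le> s" "n \<le> s"
    unfolding gens_def by blast
  have "y ** mono u = mono u' ** rel s G Gi l m n ** mono (v @ u)"
    unfolding y by (simp add: ncmult_assoc mono_mult[symmetric])
  also have "\<dots> \<in> gens s G Gi" unfolding gens_def using h u
    by (intro CollectI exI[of _ u'] exI[of _ "v @ u"] exI[of _ l] exI[of _ m] exI[of _ n]) auto
  finally show ?case unfolding relideal_gens by (rule nc.span_base)
qed

lemma I_sum: "(\<And>i. i \<in> A \<Longrightarrow> f i \<in> relideal s G Gi) \<Longrightarrow> (\<Sum>i\<in>A. f i) \<in> relideal s G Gi"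
  unfolding relideal_gens by (rule nc.span_sum)
lemma I_scale: "x \<in> relideal s G Gi \<Longrightarrow> cscale c x \<in> relideal s G Gi"
  unfolding relideal_gens by (rule nc.span_scale)
lemma I_add: "x \<in> relideal s G Gi \<Longrightarrow> y \<in> relideal s G Gi \<Longrightarrow> x + y \<in> relideal s G Gi"
  unfolding relideal_gens by (rule nc.span_add)
lemma I_diff: "x \<in> relideal s G Gi \<Longrightarrow> y \<in> relideal s G Gi \<Longrightarrow> x - y \<in> relideal s G Gi"
  unfolding relideal_gens by (rule nc.span_diff)
lemma I_zero: "0 \<in> relideal s G Gi"
  unfolding relideal_gens by (rule nc.span_zero)

lemma I_left:
  assumes x: "x \<in> relideal s G Gi" and p: "p \<in> homog s k"
  shows "p ** x \<in> relideal s G Gi"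
proof -
  have "p ** x = (\<Sum>w\<in>words s k. cscale (p w) (mono w ** x))"
    by (subst homog_expand[OF p]) (simp add: ncmult_sum_left ncmult_scale_left)
  also have "\<dots> \<in> relideal s G Gi"
    by (intro I_sum I_scale I_left_mono[OF x]) (auto simp: words_def)
  finally show ?thesis .
qed

lemma I_right:
  assumes x: "x \<in> relideal s G Gi" and p: "p \<in> homog s k"
  shows "x ** p \<in> relideal s G Gi"
proof -
  have "x ** p = (\<Sum>w\<in>words s k. cscale (p w) (x ** mono w))"
    by (subst homog_expand[OF p]) (simp add: ncmult_sum_right ncmult_scale_right)
  also have "\<dots> \<in> relideal s G Gi"
    by (intro I_sum I_scale I_right_mono[OF x]) (auto simp: words_def)
  finally show ?thesis .
qed

lemma rel_in_I:
  assumes "l \<le> s" "m \<le> s" "n \<le> s"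
  shows "rel s G Gi l m n \<in> relideal s G Gi"
proof -
  have "mono [] ** rel s G Gi l m n ** mono [] \<in> gens s G Gi"
    unfolding gens_def using assms
    by (intro CollectI exI[of _ "[]"] exI[of _ "[]"] exI[of _ l] exI[of _ m] exI[of _ n]) auto
  then show ?thesis unfolding relideal_gens ncone_left ncone_right by (rule nc.span_base)
qed

locale ctx =
  fixes s :: nat and G Gi :: "nat \<Rightarrow> nat \<Rightarrow> real"
  assumes s1: "s \<ge> 1"
    and Gsym: "\<forall>\<mu>\<le>s. \<forall>\<nu>\<le>s. G \<mu> \<nu> = G \<nu> \<mu>"
    and GGi: "\<forall>\<mu>\<le>s. \<forall>\<nu>\<le>s. (\<Sum>\<alpha>\<le>s. G \<mu> \<alpha> * Gi \<alpha> \<nu>) = (if \<mu> = \<nu> then 1 else 0)"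
    and GiG: "\<forall>\<mu>\<le>s. \<forall>\<nu>\<le>s. (\<Sum>\<alpha>\<le>s. Gi \<mu> \<alpha> * G \<alpha> \<nu>) = (if \<mu> = \<nu> then 1 else 0)"
begin

abbreviation gc where "gc a b \<equiv> complex_of_real (G a b)"
abbreviation gic where "gic a b \<equiv> complex_of_real (Gi a b)"

lemma c_inv_r: "x \<le> s \<Longrightarrow> y \<le> s \<Longrightarrow> (\<Sum>\<alpha>\<le>s. gc x \<alpha> * gic \<alpha> y) = (if x = y then 1 else 0)"
proof -
  assume "x \<le> s" "y \<le> s"
  then have "(\<Sum>\<alpha>\<le>s. G x \<alpha> * Gi \<alpha> y) = (if x = y then 1 else 0)" using GGi by blast
  then have "complex_of_real (\<Sum>\<alpha>\<le>s. G x \<alpha> * Gi \<alpha> y) = (if x = y then 1 else 0)" by simp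
  then show ?thesis by simp
qed

lemma c_inv_l: "x \<le> s \<Longrightarrow> y \<le> s \<Longrightarrow> (\<Sum>\<alpha>\<le>s. gic x \<alpha> * gc \<alpha> y) = (if x = y then 1 else 0)"
proof -
  assume "x \<le> s" "y \<le> s"
  then have "(\<Sum>\<alpha>\<le>s. Gi x \<alpha> * G \<alpha> y) = (if x = y then 1 else 0)" using GiG by blast
  then have "complex_of_real (\<Sum>\<alpha>\<le>s. Gi x \<alpha> * G \<alpha> y) = (if x = y then 1 else 0)" by simp
  then show ?thesis by simp
qed

lemma G_sym: "a \<le> s \<Longrightarrow> b \<le> s \<Longrightarrow> G a b = G b a"
  using Gsym by blast

lemma gc_sym: "a \<le> s \<Longrightarrow> b \<le> s \<Longrightarrow> gc a b = gc b a"
  by (metis G_sym)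

lemma gic_sym: assumes "a \<le> s" "b \<le> s" shows "gic a b = gic b a"
proof -
  have "(\<Sum>x\<le>s. \<Sum>\<alpha>\<le>s. gic \<alpha> a * gc \<alpha> x * gic x b) = (\<Sum>x\<le>s. (\<Sum>\<alpha>\<le>s. gic \<alpha> a * gc \<alpha> x) * gic x b)"
    by (simp add: sum_distrib_right)
  also have "\<dots> = (\<Sum>x\<le>s. (if a = x then gic x b else 0))"
  proof (rule sum.cong[OF refl])
    fix x assume x: "x \<in> {..s}"
    have "(\<Sum>\<alpha>\<le>s. gic \<alpha> a * gc \<alpha> x) = (\<Sum>\<alpha>\<le>s. gc x \<alpha> * gic \<alpha> a)"
    proof (rule sum.cong[OF refl])
      fix \<alpha> assume "\<alpha> \<in> {..s}"
      then show "gic \<alpha> a * gc \<alpha> x = gc x \<alpha> * gic \<alpha> a" using x by (metis atMost_iff gc_sym mult.commute)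
    qed
    then show "(\<Sum>\<alpha>\<le>s. gic \<alpha> a * gc \<alpha> x) * gic x b = (if a = x then gic x b else 0)"
      using x assms c_inv_r[of x a] by auto
  qed
  also have "\<dots> = gic a b" using assms by simp
  finally have 1: "(\<Sum>x\<le>s. \<Sum>\<alpha>\<le>s. gic \<alpha> a * gc \<alpha> x * gic x b) = gic a b" .
  have "(\<Sum>x\<le>s. \<Sum>\<alpha>\<le>s. gic \<alpha> a * gc \<alpha> x * gic x b) = (\<Sum>\<alpha>\<le>s. gic \<alpha> a * (\<Sum>x\<le>s. gc \<alpha> x * gic x b))"
    by (subst sum.swap) (simp add: sum_distrib_left mult.assoc)
  also have "\<dots> = (\<Sum>\<alpha>\<le>s. gic \<alpha> a * (if \<alpha> = b then 1 else 0))"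
    using assms by (intro sum.cong) (auto simp: c_inv_r)
  also have "\<dots> = gic b a" using assms by (simp add: if_distrib cong: if_cong)
  finally show ?thesis using 1 by simp
qed

lemma K1: assumes "n \<le> s"
  shows "(\<Sum>a\<le>s. \<Sum>b\<le>s. cscale (gc a b) (cscale (gic a n) (V b))) = V n"
proof (rule ext)
  fix w
  have "(\<Sum>a\<le>s. \<Sum>b\<le>s. cscale (gc a b) (cscale (gic a n) (V b))) w
      = (\<Sum>b\<le>s. (\<Sum>a\<le>s. gc b a * gic a n) * V b w)"
    by (simp add: sum_fun_apply sum_distrib_right mult.assoc) (subst sum.swap, auto simp: gc_sym intro!: sum.cong)
  also have "\<dots> = (\<Sum>b\<le>s. (if b = n then V b w else 0))"
    using assms by (intro sum.cong) (auto simp: c_inv_r)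
  also have "\<dots> = V n w" using assms by simp
  finally show "(\<Sum>a\<le>s. \<Sum>b\<le>s. cscale (gc a b) (cscale (gic a n) (V b))) w = V n w" .
qed

lemma K2: assumes "n \<le> s"
  shows "(\<Sum>a\<le>s. \<Sum>b\<le>s. cscale (gc a b) (cscale (gic b n) (V a))) = V n"
proof (rule ext)
  fix w
  have "(\<Sum>a\<le>s. \<Sum>b\<le>s. cscale (gc a b) (cscale (gic b n) (V a))) w
      = (\<Sum>a\<le>s. (\<Sum>b\<le>s. gc a b * gic b n) * V a w)"
    by (simp add: sum_fun_apply sum_distrib_right mult.assoc)
  also have "\<dots> = (\<Sum>a\<le>s. (if a = n then V a w else 0))"
    using assms by (intro sum.cong) (auto simp: c_inv_r)
  also have "\<dots> = V n w" using assms by simp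
  finally show "(\<Sum>a\<le>s. \<Sum>b\<le>s. cscale (gc a b) (cscale (gic b n) (V a))) w = V n w" .
qed

lemma K3: assumes "n \<le> s"
  shows "(\<Sum>a\<le>s. \<Sum>b\<le>s. cscale (gc a b) (cscale (gic n a) (V b))) = V n"
proof -
  have "(\<Sum>a\<le>s. \<Sum>b\<le>s. cscale (gc a b) (cscale (gic n a) (V b)))
      = (\<Sum>a\<le>s. \<Sum>b\<le>s. cscale (gc a b) (cscale (gic a n) (V b)))"
    using assms by (intro sum.cong) (auto simp: gic_sym)
  then show ?thesis using K1[OF assms] by simp
qed

lemma K4: assumes "n \<le> s"
  shows "(\<Sum>a\<le>s. \<Sum>b\<le>s. cscale (gc a b) (cscale (gic n b) (V a))) = V n"
proof -
  have "(\<Sum>a\<le>s. \<Sum>b\<le>s. cscale (gc a b) (cscale (gic n b) (V a)))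
      = (\<Sum>a\<le>s. \<Sum>b\<le>s. cscale (gc a b) (cscale (gic b n) (V a)))"
    using assms by (intro sum.cong) (auto simp: gic_sym)
  then show ?thesis using K2[OF assms] by simp
qed

lemma Ktr: "(\<Sum>a\<le>s. \<Sum>b\<le>s. cscale (gc a b) (cscale (gic a b) V)) = cscale (of_nat (s + 1)) V"
proof (rule ext)
  fix w
  have "(\<Sum>a\<le>s. \<Sum>b\<le>s. cscale (gc a b) (cscale (gic a b) V)) w
      = (\<Sum>a\<le>s. (\<Sum>b\<le>s. gic a b * gc b a) * V w)"
    by (simp add: sum_fun_apply sum_distrib_right mult.assoc) (auto simp: gc_sym mult.commute intro!: sum.cong)
  also have "\<dots> = (\<Sum>a\<le>s. V w)"
    by (intro sum.cong) (auto simp: c_inv_l)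
  also have "\<dots> = cscale (of_nat (s + 1)) V w" by simp
  finally show "(\<Sum>a\<le>s. \<Sum>b\<le>s. cscale (gc a b) (cscale (gic a b) V)) w = cscale (of_nat (s + 1)) V w" .
qed

lemma Kc: "(\<Sum>a\<le>s. \<Sum>b\<le>s. cscale (gc a b) (cscale c (V a b))) = cscale c (\<Sum>a\<le>s. \<Sum>b\<le>s. cscale (gc a b) (V a b))"
  by (simp add: fun_eq_iff sum_fun_apply sum_distrib_left mult_ac)

end

lemma distR: "(\<Sum>a\<in>A. \<Sum>b\<in>A. cscale (c a b) (cscale k (cscale (x a b) (P a b) + cscale (y a b) (Q a b) - cscale (2 * z a b) (R a b))))
   = cscale k ((\<Sum>a\<in>A. \<Sum>b\<in>A. cscale (c a b) (cscale (x a b) (P a b))) + (\<Sum>a\<in>A. \<Sum>b\<in>A. cscale (c a b) (cscale (y a b) (Q a b)))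
       - cscale 2 (\<Sum>a\<in>A. \<Sum>b\<in>A. cscale (c a b) (cscale (z a b) (R a b))))"
  by (simp add: fun_eq_iff sum_fun_apply sum_distrib_left sum.distrib sum_subtractf algebra_simps)

lemma scal6: fixes S x y z q :: complex assumes S: "S \<noteq> 0" and S1: "S + 1 \<noteq> 0"
  shows "x - q / (S + 1) * z = (- S / (3 * (S + 1))) * (x - 1 / S * (q * z + x - 2 * y))
     + (2 * (- S / (3 * (S + 1)))) * (- 2 * x - 1 / S * (y + x - 2 * (q * z)))"
proof -
  define a where "a = - S / (3 * (S + 1))"
  have e1: "a * (x - 1 / S * (q * z + x - 2 * y)) + (2 * a) * (- 2 * x - 1 / S * (y + x - 2 * (q * z)))
     = a * ((x - 1 / S * (q * z + x - 2 * y)) + 2 * (- 2 * x - 1 / S * (y + x - 2 * (q * z))))"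
    by (simp add: algebra_simps)
  have e2: "(x - 1 / S * (q * z + x - 2 * y)) + 2 * (- 2 * x - 1 / S * (y + x - 2 * (q * z)))
     = (3 * (q * z) - 3 * (S + 1) * x) / S"
    using S by (simp add: field_simps)
  have e3: "a * ((3 * (q * z) - 3 * (S + 1) * x) / S) = x - q / (S + 1) * z"
  proof -
    have h1: "3 + S * 3 \<noteq> 0" using S1 by (metis add.commute distrib_right mult_1 mult_eq_0_iff zero_neq_numeral)
    have h2: "S * 3 + S * (S * 3) \<noteq> 0" using h1 S by (metis distrib_left mult.right_neutral mult_eq_0_iff)
    show ?thesis unfolding a_def using S S1 h1 h2 by (simp add: field_simps)
  qed
  show ?thesis unfolding a_def[symmetric] by (simp only: e1 e2 e3)
qed

context ctx
begin

abbreviation gg where "gg \<equiv> gel s G"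
abbreviation X where "X k \<equiv> theta k ** gg"
abbreviation M where "M a b \<equiv> theta a ** theta b ** gg"
abbreviation N where "N a b \<equiv> theta a ** gg ** theta b"
abbreviation mm where "mm \<equiv> gg ** gg"

definition R where "R l m n = cscale (1 / of_nat s)
   (cscale (gic l m) (X n) + cscale (gic m n) (X l) - cscale (2 * gic l n) (X m))"

definition cg where "cg p q \<longleftrightarrow> p - q \<in> relideal s G Gi"

lemma cg_refl: "cg p p" by (simp add: cg_def I_zero)
lemma cg_sym: "cg p q \<Longrightarrow> cg q p"
  unfolding cg_def relideal_gens using nc.span_neg by fastforce
lemma cg_trans[trans]: "cg p q \<Longrightarrow> cg q r \<Longrightarrow> cg p r"
proof -
  assume "cg p q" "cg q r"
  then have "(p - q) + (q - r) \<in> relideal s G Gi" unfolding cg_def by (rule I_add)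
  then show ?thesis unfolding cg_def by simp
qed
lemma cg_add: "cg p q \<Longrightarrow> cg p' q' \<Longrightarrow> cg (p + p') (q + q')"
proof -
  assume "cg p q" "cg p' q'"
  then have "(p - q) + (p' - q') \<in> relideal s G Gi" unfolding cg_def by (rule I_add)
  then show ?thesis unfolding cg_def by (simp add: algebra_simps)
qed
lemma cg_diff: "cg p q \<Longrightarrow> cg p' q' \<Longrightarrow> cg (p - p') (q - q')"
proof -
  assume "cg p q" "cg p' q'"
  then have "(p - q) - (p' - q') \<in> relideal s G Gi" unfolding cg_def by (rule I_diff)
  then show ?thesis unfolding cg_def by (simp add: algebra_simps)
qed
lemma cg_scale: "cg p q \<Longrightarrow> cg (cscale c p) (cscale c q)"
proof -
  assume "cg p q"
  then have "cscale c (p - q) \<in> relideal s G Gi" unfolding cg_def by (rule I_scale)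
  moreover have "cscale c (p - q) = cscale c p - cscale c q" by (simp add: fun_eq_iff algebra_simps)
  ultimately show ?thesis unfolding cg_def by simp
qed
lemma cg_sum: "(\<And>i. i \<in> A \<Longrightarrow> cg (f i) (h i)) \<Longrightarrow> cg (\<Sum>i\<in>A. f i) (\<Sum>i\<in>A. h i)"
proof -
  assume "\<And>i. i \<in> A \<Longrightarrow> cg (f i) (h i)"
  then have "(\<Sum>i\<in>A. f i - h i) \<in> relideal s G Gi" unfolding cg_def by (rule I_sum)
  then show ?thesis unfolding cg_def by (simp add: sum_subtractf)
qed
lemma cg_left: "p \<in> homog s k \<Longrightarrow> cg a b \<Longrightarrow> cg (p ** a) (p ** b)"
  unfolding cg_def by (drule (1) I_left[rotated]) (simp add: ncmult_diff_right)
lemma cg_right: "p \<in> homog s k \<Longrightarrow> cg a b \<Longrightarrow> cg (a ** p) (b ** p)"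
  unfolding cg_def by (drule (1) I_right[rotated]) (simp add: ncmult_diff_left)
lemma cg_0: "cg x 0 \<longleftrightarrow> x \<in> relideal s G Gi" by (simp add: cg_def)

lemma th: "l \<le> s \<Longrightarrow> theta l \<in> homog s 1" by (rule theta_homog)

lemma R0: assumes "l \<le> s" "m \<le> s" "n \<le> s"
  shows "cg (theta l ** theta m ** theta n) (R l m n)"
proof -
  have "rel s G Gi l m n = theta l ** theta m ** theta n - R l m n"
    unfolding rel_def R_def by (simp add: ncmult_add_left ncmult_diff_left ncmult_scale_left)
  moreover have "rel s G Gi l m n \<in> relideal s G Gi" by (rule rel_in_I[OF assms])
  ultimately show ?thesis unfolding cg_def by simp
qed

lemma sN: "of_nat s \<noteq> (0::complex)" using s1 by simp

lemma cg_eq: "a = b \<Longrightarrow> cg a b" by (simp add: cg_refl)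

lemma S1: assumes n: "n \<le> s" shows "cg (gg ** theta n) (X n)"
proof -
  have "cg (gg ** theta n) (\<Sum>l\<le>s. \<Sum>m\<le>s. cscale (gc l m) (theta l ** theta m ** theta n))"
    unfolding gel_def by (rule cg_eq) (simp add: ncmult_sum_left ncmult_scale_left)
  also have "cg \<dots> (\<Sum>l\<le>s. \<Sum>m\<le>s. cscale (gc l m) (R l m n))"
    by (intro cg_sum cg_scale R0 n) auto
  also have "cg \<dots> (cscale (1 / of_nat s) (cscale (of_nat (s + 1)) (X n) + X n - cscale 2 (X n)))"
    unfolding R_def distR by (rule cg_eq) (simp only: Ktr K1[OF n] K2[OF n])
  also have "cg \<dots> (X n)"
    using sN by (intro cg_eq) (simp add: fun_eq_iff field_simps)
  finally show ?thesis .
qed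

lemma S2: assumes x: "x \<le> s" and y: "y \<le> s" shows "cg (N x y) (M x y)"
proof -
  have "cg (N x y) (theta x ** (gg ** theta y))" by (rule cg_eq) (simp add: ncmult_assoc)
  also have "cg \<dots> (theta x ** (theta y ** gg))" by (rule cg_left[OF th[OF x] S1[OF y]])
  also have "cg \<dots> (M x y)" by (rule cg_eq) (simp add: ncmult_assoc)
  finally show ?thesis .
qed

lemma gg_sum: "(\<Sum>a\<le>s. \<Sum>b\<le>s. cscale (gc a b) (theta a ** theta b)) = gg"
  by (simp add: gel_def)

lemma S3: "(\<Sum>a\<le>s. \<Sum>b\<le>s. cscale (gc a b) (M a b)) = mm"
proof -
  have "(\<Sum>a\<le>s. \<Sum>b\<le>s. cscale (gc a b) (M a b)) = (\<Sum>a\<le>s. \<Sum>b\<le>s. cscale (gc a b) (theta a ** theta b)) ** gg"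
    by (simp add: ncmult_sum_left ncmult_scale_left)
  then show ?thesis by (simp only: gg_sum)
qed

lemma S3': "cg (\<Sum>a\<le>s. \<Sum>b\<le>s. cscale (gc a b) (N a b)) mm"
proof -
  have "cg (\<Sum>a\<le>s. \<Sum>b\<le>s. cscale (gc a b) (N a b)) (\<Sum>a\<le>s. \<Sum>b\<le>s. cscale (gc a b) (M a b))"
    by (intro cg_sum cg_scale S2) auto
  then show ?thesis by (simp only: S3)
qed

lemma times_gg: "p ** gg = (\<Sum>d\<le>s. \<Sum>e\<le>s. cscale (gc d e) (p ** theta d ** theta e))"
  by (simp add: gel_def ncmult_sum_right ncmult_scale_right ncmult_assoc)

lemma S4: assumes x: "x \<le> s" and y: "y \<le> s"
  shows "cg (M x y) (cscale (1 / of_nat s) (cscale (gic x y) mm + M x y - cscale 2 (M y x)))"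
proof -
  have "cg (M x y) (\<Sum>a\<le>s. \<Sum>b\<le>s. cscale (gc a b) (theta x ** theta y ** theta a ** theta b))"
    by (rule cg_eq) (rule times_gg)
  also have "cg \<dots> (\<Sum>a\<le>s. \<Sum>b\<le>s. cscale (gc a b) (R x y a ** theta b))"
    by (intro cg_sum cg_scale cg_right[OF th] R0 x y) auto
  also have "cg \<dots> (cscale (1 / of_nat s) (cscale (gic x y) (\<Sum>a\<le>s. \<Sum>b\<le>s. cscale (gc a b) (N a b)) + N x y - cscale 2 (N y x)))"
    by (rule cg_eq) (simp only: R_def ncmult_add_left ncmult_diff_left ncmult_scale_left distR Kc K3[OF x] K3[OF y])
  also have "cg \<dots> (cscale (1 / of_nat s) (cscale (gic x y) mm + M x y - cscale 2 (M y x)))"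
    by (intro cg_scale cg_add cg_diff S3' S2 x y)
  finally show ?thesis .
qed

lemma S5: assumes a: "a \<le> s" and c: "c \<le> s"
  shows "cg (cscale (-2) (M a c)) (cscale (1 / of_nat s) (M c a + M a c - cscale 2 (cscale (gic a c) mm)))"
proof -
  define Z where "Z = (\<Sum>b\<le>s. \<Sum>d\<le>s. cscale (gc b d) (theta a ** theta b ** theta c ** theta d))"
  have "cg Z (\<Sum>b\<le>s. \<Sum>d\<le>s. cscale (gc b d) (theta a ** (theta b ** theta c ** theta d)))"
    unfolding Z_def by (rule cg_eq) (simp only: ncmult_assoc)
  also have "cg \<dots> (\<Sum>b\<le>s. \<Sum>d\<le>s. cscale (gc b d) (theta a ** R b c d))"
    by (intro cg_sum cg_scale cg_left[OF th[OF a]] R0 c) auto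
  also have "cg \<dots> (cscale (1 / of_nat s) (M a c + M a c - cscale 2 (cscale (of_nat (s + 1)) (M a c))))"
    by (rule cg_eq) (simp only: R_def ncmult_add_right ncmult_diff_right ncmult_scale_right ncmult_assoc[symmetric]
        distR K1[OF c] K4[OF c] Ktr)
  also have "cg \<dots> (cscale (-2) (M a c))"
    using sN by (intro cg_eq) (simp add: fun_eq_iff field_simps)
  finally have A: "cg Z (cscale (-2) (M a c))" .
  have "cg Z (\<Sum>b\<le>s. \<Sum>d\<le>s. cscale (gc b d) (R a b c ** theta d))"
    unfolding Z_def by (intro cg_sum cg_scale cg_right[OF th] R0 a c) auto
  also have "cg \<dots> (cscale (1 / of_nat s) (N c a + N a c - cscale 2 (cscale (gic a c) (\<Sum>b\<le>s. \<Sum>d\<le>s. cscale (gc b d) (N b d)))))"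
    by (rule cg_eq) (simp only: R_def ncmult_add_left ncmult_diff_left ncmult_scale_left distR Kc K1[OF c] K3[OF a])
  also have "cg \<dots> (cscale (1 / of_nat s) (M c a + M a c - cscale 2 (cscale (gic a c) mm)))"
    by (intro cg_scale cg_add cg_diff S3' S2 a c)
  finally have B: "cg Z (cscale (1 / of_nat s) (M c a + M a c - cscale 2 (cscale (gic a c) mm)))" .
  show ?thesis by (rule cg_trans[OF cg_sym[OF A] B])
qed

lemma sN1: "of_nat (s + 1) \<noteq> (0::complex)" by (metis of_nat_eq_0_iff add_eq_0_iff_both_eq_0 one_neq_zero)

lemma S6: assumes a: "a \<le> s" and c: "c \<le> s"
  shows "cg (M a c) (cscale (gic a c / of_nat (s + 1)) mm)"
proof -
  define D4 where "D4 = M a c - cscale (1 / of_nat s) (cscale (gic a c) mm + M a c - cscale 2 (M c a))"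
  define D5 where "D5 = cscale (-2) (M a c) - cscale (1 / of_nat s) (M c a + M a c - cscale 2 (cscale (gic a c) mm))"
  have d4: "D4 \<in> relideal s G Gi" using S4[OF a c] unfolding cg_def D4_def .
  have d5: "D5 \<in> relideal s G Gi" using S5[OF a c] unfolding cg_def D5_def .
  define \<alpha> :: complex where "\<alpha> = - of_nat s / (3 * of_nat (s + 1))"
  have e: "M a c - cscale (gic a c / of_nat (s + 1)) mm = cscale \<alpha> D4 + cscale (2 * \<alpha>) D5"
  proof (rule ext)
    fix w
    show "(M a c - cscale (gic a c / of_nat (s + 1)) mm) w = (cscale \<alpha> D4 + cscale (2 * \<alpha>) D5) w"
    proof -
      have s1': "of_nat s + 1 \<noteq> (0::complex)" using sN1 by (simp add: add.commute)
      show ?thesis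
        using scal6[OF sN s1', of "M a c w" "gic a c" "mm w" "M c a w"]
        unfolding D4_def D5_def \<alpha>_def by (simp add: ac_simps)
    qed
  qed
  have "cscale \<alpha> D4 + cscale (2 * \<alpha>) D5 \<in> relideal s G Gi" by (intro I_add I_scale d4 d5)
  then show ?thesis unfolding cg_def e .
qed

lemma S7: assumes "a \<le> s" "b \<le> s" "c \<le> s" "d \<le> s"
  shows "\<exists>\<kappa>. cg (theta a ** theta b ** theta c ** theta d) (cscale \<kappa> mm)"
proof -
  let ?q = "\<lambda>x y. gic x y / of_nat (s + 1)"
  have "cg (theta a ** theta b ** theta c ** theta d) (theta a ** (theta b ** theta c ** theta d))"
    by (rule cg_eq) (simp only: ncmult_assoc)
  also have "cg \<dots> (theta a ** R b c d)"
    by (intro cg_left[OF th] R0 assms)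
  also have "cg \<dots> (cscale (1 / of_nat s) (cscale (gic b c) (M a d) + cscale (gic c d) (M a b) - cscale (2 * gic b d) (M a c)))"
    by (rule cg_eq) (simp only: R_def ncmult_add_right ncmult_diff_right ncmult_scale_right ncmult_assoc[symmetric])
  also have "cg \<dots> (cscale (1 / of_nat s) (cscale (gic b c) (cscale (?q a d) mm) + cscale (gic c d) (cscale (?q a b) mm) - cscale (2 * gic b d) (cscale (?q a c) mm)))"
    by (intro cg_scale cg_add cg_diff S6 assms)
  also have "cg \<dots> (cscale ((1 / of_nat s) * (gic b c * ?q a d + gic c d * ?q a b - 2 * gic b d * ?q a c)) mm)"
    by (rule cg_eq) (simp add: fun_eq_iff algebra_simps)
  finally show ?thesis by blast
qed

lemma S8: assumes a: "a \<le> s" shows "theta a ** gg ** gg \<in> relideal s G Gi"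
proof -
  let ?Y = "theta a ** gg ** gg"
  have "cg ?Y (\<Sum>d\<le>s. \<Sum>e\<le>s. cscale (gc d e) (N a d ** theta e))"
    by (rule cg_eq) (rule times_gg)
  also have "cg \<dots> (\<Sum>d\<le>s. \<Sum>e\<le>s. cscale (gc d e) (M a d ** theta e))"
    by (intro cg_sum cg_scale cg_right[OF th] S2 a) auto
  also have "cg \<dots> (\<Sum>d\<le>s. \<Sum>e\<le>s. cscale (gc d e) (cscale (gic a d / of_nat (s + 1)) mm ** theta e))"
    by (intro cg_sum cg_scale cg_right[OF th] S6 a) auto
  also have "cg \<dots> (cscale (1 / of_nat (s + 1)) (\<Sum>d\<le>s. \<Sum>e\<le>s. cscale (gc d e) (cscale (gic a d) (mm ** theta e))))"
  proof (rule cg_eq)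
    have "(\<Sum>d\<le>s. \<Sum>e\<le>s. cscale (gc d e) (cscale (gic a d / of_nat (s + 1)) mm ** theta e))
      = (\<Sum>d\<le>s. \<Sum>e\<le>s. cscale (1 / of_nat (s + 1)) (cscale (gc d e) (cscale (gic a d) (mm ** theta e))))"
      by (intro sum.cong refl) (simp add: ncmult_scale_left fun_eq_iff)
    then show "(\<Sum>d\<le>s. \<Sum>e\<le>s. cscale (gc d e) (cscale (gic a d / of_nat (s + 1)) mm ** theta e))
      = cscale (1 / of_nat (s + 1)) (\<Sum>d\<le>s. \<Sum>e\<le>s. cscale (gc d e) (cscale (gic a d) (mm ** theta e)))"
      by (simp only: cscale_sum)
  qed
  also have "cg \<dots> (cscale (1 / of_nat (s + 1)) (gg ** (gg ** theta a)))"
    by (rule cg_eq) (simp only: K3[OF a] ncmult_assoc)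
  also have "cg \<dots> (cscale (1 / of_nat (s + 1)) (gg ** X a))"
    by (intro cg_scale cg_left[OF gel_homog] S1 a)
  also have "cg \<dots> (cscale (1 / of_nat (s + 1)) ((gg ** theta a) ** gg))"
    by (rule cg_eq) (simp only: ncmult_assoc)
  also have "cg \<dots> (cscale (1 / of_nat (s + 1)) ?Y)"
    by (intro cg_scale cg_right[OF gel_homog] S1 a)
  finally have "?Y - cscale (1 / of_nat (s + 1)) ?Y \<in> relideal s G Gi" unfolding cg_def .
  then have "cscale (of_nat (s + 1) / of_nat s) (?Y - cscale (1 / of_nat (s + 1)) ?Y) \<in> relideal s G Gi"
    by (rule I_scale)
  moreover have "cscale (of_nat (s + 1) / of_nat s) (?Y - cscale (1 / of_nat (s + 1)) ?Y) = ?Y"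
  proof (rule ext)
    fix w
    have s1': "of_nat s + 1 \<noteq> (0::complex)" using sN1 by (simp add: add.commute)
    show "cscale (of_nat (s + 1) / of_nat s) (?Y - cscale (1 / of_nat (s + 1)) ?Y) w = ?Y w"
      using sN s1' by (simp add: field_simps)
  qed
  ultimately show ?thesis by simp
qed

lemma mono_theta: "mono (a # w) = theta a ** mono w"
  by (simp add: theta_def mono_mult)

lemma S9: assumes w: "w \<in> words s 5" shows "mono w \<in> relideal s G Gi"
proof -
  obtain a b c d e where we: "w = [a, b, c, d, e]"
    using w unfolding words_def by (auto simp: numeral_eq_Suc length_Suc_conv)
  have le: "a \<le> s" "b \<le> s" "c \<le> s" "d \<le> s" "e \<le> s" using w we by (auto simp: words_def)
  obtain \<kappa> where k: "cg (theta b ** theta c ** theta d ** theta e) (cscale \<kappa> mm)"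
    using S7[OF le(2-5)] by blast
  have "cg (mono w) (theta a ** (theta b ** theta c ** theta d ** theta e))"
    unfolding we by (rule cg_eq) (simp add: mono_mult theta_def)
  also have "cg \<dots> (theta a ** cscale \<kappa> mm)" by (rule cg_left[OF th[OF le(1)] k])
  also have "cg \<dots> (cscale \<kappa> (theta a ** gg ** gg))"
    by (rule cg_eq) (simp add: ncmult_scale_right ncmult_assoc)
  also have "cg \<dots> 0" unfolding cg_0 by (intro I_scale S8 le)
  finally show ?thesis unfolding cg_0 .
qed

lemma S10: assumes n: "n \<ge> 5" shows "homog s n \<subseteq> relideal s G Gi"
proof -
  have "mono w \<in> relideal s G Gi" if w: "w \<in> words s n" for w
  proof -
    have "mono w = mono (take 5 w) ** mono (drop 5 w)" by (simp add: mono_mult)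
    moreover have "take 5 w \<in> words s 5" "set (drop 5 w) \<subseteq> {..s}"
      using w n by (auto simp: words_def dest: in_set_takeD in_set_dropD)
    ultimately show ?thesis using I_right_mono S9 by metis
  qed
  then have "nc.span (mono ` words s n) \<subseteq> relideal s G Gi"
    by (intro nc.span_minimal relideal_subspace) auto
  then show ?thesis using homog_span by blast
qed

end

lemma homog_disjoint: "x \<in> homog s n \<Longrightarrow> x \<in> homog s d \<Longrightarrow> d \<noteq> n \<Longrightarrow> x = 0"
  by (auto simp: homog_def fun_eq_iff)

lemma wfun_diff: "wfun W a (p - q) = wfun W a p - wfun W a q"
  by (simp add: wfun_def right_diff_distrib sum_subtractf)

lemma wfun_mono: "finite W \<Longrightarrow> w0 \<in> W \<Longrightarrow> wfun W a (mono w0) = a w0"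
  by (simp add: wfun_def mono_def if_distrib cong: if_cong)

lemma wfun_dsum: "wfun W a (\<Sum>x\<in>A. \<Sum>y\<in>A. cscale (c x y) (p x y)) = (\<Sum>x\<in>A. \<Sum>y\<in>A. c x y * wfun W a (p x y))"
  by (simp add: wfun_sum wfun_scale)

lemma sdistR: "(\<Sum>a\<in>A. \<Sum>b\<in>A. (c a b :: complex) * (k * (x a b + y a b - 2 * z a b)))
   = k * ((\<Sum>a\<in>A. \<Sum>b\<in>A. c a b * x a b) + (\<Sum>a\<in>A. \<Sum>b\<in>A. c a b * y a b) - 2 * (\<Sum>a\<in>A. \<Sum>b\<in>A. c a b * z a b))"
  by (simp add: sum_distrib_left sum.distrib sum_subtractf algebra_simps)

lemma sdist3: "(\<Sum>a\<in>A. \<Sum>b\<in>A. (c a b :: complex) * (x a b + y a b - 2 * z a b))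
   = (\<Sum>a\<in>A. \<Sum>b\<in>A. c a b * x a b) + (\<Sum>a\<in>A. \<Sum>b\<in>A. c a b * y a b) - 2 * (\<Sum>a\<in>A. \<Sum>b\<in>A. c a b * z a b)"
  by (simp add: sum_distrib_left sum.distrib sum_subtractf algebra_simps)


lemma gens_deg:
  assumes "x \<in> gens s G Gi" "x \<in> homog s n" "x \<noteq> 0"
  shows "\<exists>u v l m n'. x = mono u ** rel s G Gi l m n' ** mono v \<and> set u \<subseteq> {..s} \<and> set v \<subseteq> {..s}
     \<and> l \<le> s \<and> m \<le> s \<and> n' \<le> s \<and> length u + 3 + length v = n"
proof -
  from assms(1) obtain u v l m n' where x: "x = mono u ** rel s G Gi l m n' ** mono v"
    and h: "set u \<subseteq> {..s}" "set v \<subseteq> {..s}" "l \<le> s" "m \<le> s" "n' \<le> s"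
    unfolding gens_def by blast
  have "x \<in> homog s (length u + 3 + length v)"
    unfolding x by (intro homog_mult mono_homog' rel_homog h)
  then have "length u + 3 + length v = n" using homog_disjoint[OF assms(2)] assms(3) by blast
  then show ?thesis using x h by blast
qed

lemma gens_small: "x \<in> gens s G Gi \<Longrightarrow> x \<in> homog s n \<Longrightarrow> n < 3 \<Longrightarrow> x = 0"
  using gens_deg by fastforce

definition dl :: "nat \<Rightarrow> nat \<Rightarrow> complex" where "dl a b = (if a = b then 1 else 0)"

lemma gens_small': "x \<in> gens s G Gi \<Longrightarrow> x \<in> homog s n \<Longrightarrow> n < 3 \<Longrightarrow> wfun W a x = 0"
  using gens_small wfun_zero by metis

lemma words_mem: "w \<in> words s n \<longleftrightarrow> length w = n \<and> set w \<subseteq> {..s}" by (simp add: words_def)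

lemma wfun_mono_words: "w0 \<in> words s n \<Longrightarrow> wfun (words s n) a (mono w0) = a w0"
  by (rule wfun_mono) auto

lemma wfun_single: "wfun {w1} a p = a w1 * p w1" by (simp add: wfun_def)

lemma words_0: "words s 0 = {[]}" by (auto simp: words_def)

lemma basis0: "basis_mod s G Gi 0 {()} (\<lambda>_. ncone)"
  unfolding basis_mod_def
proof (intro conjI)
  show "finite {()}" by simp
  show h: "(\<lambda>_. ncone) ` {()} \<subseteq> homog s 0" by (auto simp: ncone_def intro: mono_homog simp: words_0)
  show "homog s 0 \<subseteq> nc.span ((\<lambda>_. ncone) ` {()} \<union> (relideal s G Gi \<inter> homog s 0))"
  proof (rule span_helper[OF h])
    fix w assume "w \<in> words s 0"
    then have "w = []" by (simp add: words_0)
    then show "\<exists>x\<in>nc.span ((\<lambda>_. ncone) ` {()}). mono w - x \<in> relideal s G Gi"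
      by (intro bexI[of _ ncone]) (auto simp: ncone_def I_zero intro: nc.span_base)
  qed
  show "\<forall>c. (\<Sum>i\<in>{()}. cscale (c i) ncone) \<in> relideal s G Gi \<longrightarrow> (\<forall>i\<in>{()}. c i = 0)"
  proof (rule indep_functionals[where n = 0])
    fix j :: unit
    show "\<exists>W a. W \<subseteq> words s 0 \<and> (\<forall>x. x \<in> gens s G Gi \<longrightarrow> x \<in> homog s 0 \<longrightarrow> wfun W a x = 0)
        \<and> (\<forall>i\<in>{()}. wfun W a ncone = (if i = j then 1 else 0))"
    proof (intro exI[of _ "{[]}"] exI[of _ "\<lambda>_. 1"] conjI)
      show "\<forall>x. x \<in> gens s G Gi \<longrightarrow> x \<in> homog s 0 \<longrightarrow> wfun {[]} (\<lambda>_. 1) x = 0"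
        using gens_small' by simp
    qed (auto simp: words_0 wfun_single ncone_def mono_def)
  qed simp
qed

lemma basis1: "basis_mod s G Gi 1 {..s} theta"
  unfolding basis_mod_def
proof (intro conjI)
  show "finite {..s}" by simp
  show h: "theta ` {..s} \<subseteq> homog s 1" using theta_homog by auto
  show "homog s 1 \<subseteq> nc.span (theta ` {..s} \<union> (relideal s G Gi \<inter> homog s 1))"
  proof (rule span_helper[OF h])
    fix w assume "w \<in> words s 1"
    then obtain l where "w = [l]" "l \<le> s" by (auto simp: words_def length_Suc_conv)
    then show "\<exists>x\<in>nc.span (theta ` {..s}). mono w - x \<in> relideal s G Gi"
      by (intro bexI[of _ "theta l"]) (auto simp: theta_def I_zero intro: nc.span_base)
  qed
  show "\<forall>c. (\<Sum>i\<in>{..s}. cscale (c i) (theta i)) \<in> relideal s G Gi \<longrightarrow> (\<forall>i\<in>{..s}. c i = 0)"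
  proof (rule indep_functionals[where n = 1])
    fix j assume j: "j \<in> {..s}"
    show "\<exists>W a. W \<subseteq> words s 1 \<and> (\<forall>x. x \<in> gens s G Gi \<longrightarrow> x \<in> homog s 1 \<longrightarrow> wfun W a x = 0)
        \<and> (\<forall>i\<in>{..s}. wfun W a (theta i) = (if i = j then 1 else 0))"
    proof (intro exI[of _ "{[j]}"] exI[of _ "\<lambda>_. 1"] conjI)
      show "\<forall>x. x \<in> gens s G Gi \<longrightarrow> x \<in> homog s 1 \<longrightarrow> wfun {[j]} (\<lambda>_. 1) x = 0"
        using gens_small' by simp
    qed (use j in \<open>auto simp: words_def wfun_single theta_def mono_def\<close>)
  qed simp
qed

lemma basis2: "basis_mod s G Gi 2 ({..s} \<times> {..s}) (\<lambda>(\<mu>, \<nu>). theta \<mu> ** theta \<nu>)"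
  unfolding basis_mod_def
proof (intro conjI)
  show "finite ({..s} \<times> {..s})" by simp
  show h: "(\<lambda>(\<mu>, \<nu>). theta \<mu> ** theta \<nu>) ` ({..s} \<times> {..s}) \<subseteq> homog s 2"
    using homog_mult[OF theta_homog theta_homog] by (auto simp: numeral_2_eq_2)
  show "homog s 2 \<subseteq> nc.span ((\<lambda>(\<mu>, \<nu>). theta \<mu> ** theta \<nu>) ` ({..s} \<times> {..s}) \<union> (relideal s G Gi \<inter> homog s 2))"
  proof (rule span_helper[OF h])
    fix w assume "w \<in> words s 2"
    then obtain l m where "w = [l, m]" "l \<le> s" "m \<le> s"
      by (auto simp: words_def length_Suc_conv numeral_2_eq_2)
    then show "\<exists>x\<in>nc.span ((\<lambda>(\<mu>, \<nu>). theta \<mu> ** theta \<nu>) ` ({..s} \<times> {..s})). mono w - x \<in> relideal s G Gi"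
      by (intro bexI[of _ "theta l ** theta m"]) (auto simp: theta_def mono_mult I_zero intro!: nc.span_base)
  qed
  show "\<forall>c. (\<Sum>i\<in>{..s} \<times> {..s}. cscale (c i) (case i of (\<mu>, \<nu>) \<Rightarrow> theta \<mu> ** theta \<nu>)) \<in> relideal s G Gi
     \<longrightarrow> (\<forall>i\<in>{..s} \<times> {..s}. c i = 0)"
  proof (rule indep_functionals[where n = 2])
    fix j assume j: "j \<in> {..s} \<times> {..s}"
    obtain j1 j2 where jj: "j = (j1, j2)" "j1 \<le> s" "j2 \<le> s" using j by auto
    show "\<exists>W a. W \<subseteq> words s 2 \<and> (\<forall>x. x \<in> gens s G Gi \<longrightarrow> x \<in> homog s 2 \<longrightarrow> wfun W a x = 0)
        \<and> (\<forall>i\<in>{..s} \<times> {..s}. wfun W a (case i of (\<mu>, \<nu>) \<Rightarrow> theta \<mu> ** theta \<nu>) = (if i = j then 1 else 0))"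
    proof (intro exI[of _ "{[j1, j2]}"] exI[of _ "\<lambda>_. 1"] conjI)
      show "\<forall>x. x \<in> gens s G Gi \<longrightarrow> x \<in> homog s 2 \<longrightarrow> wfun {[j1, j2]} (\<lambda>_. 1) x = 0"
        using gens_small' by simp
    qed (use jj in \<open>auto simp: words_def wfun_single theta_def mono_mult, auto simp: mono_def\<close>)
  qed simp
qed

context ctx
begin

lemma sK1: assumes "n \<le> s" shows "(\<Sum>a\<le>s. \<Sum>b\<le>s. gc a b * (gic a n * F b)) = F n"
  using fun_cong[OF K1[OF assms, of "\<lambda>b _. F b"], of "[]"] by (simp add: sum_fun_apply mult.assoc)
lemma sK2: assumes "n \<le> s" shows "(\<Sum>a\<le>s. \<Sum>b\<le>s. gc a b * (gic b n * F a)) = F n"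
  using fun_cong[OF K2[OF assms, of "\<lambda>b _. F b"], of "[]"] by (simp add: sum_fun_apply mult.assoc)
lemma sK3: assumes "n \<le> s" shows "(\<Sum>a\<le>s. \<Sum>b\<le>s. gc a b * (gic n a * F b)) = F n"
  using fun_cong[OF K3[OF assms, of "\<lambda>b _. F b"], of "[]"] by (simp add: sum_fun_apply mult.assoc)
lemma sK4: assumes "n \<le> s" shows "(\<Sum>a\<le>s. \<Sum>b\<le>s. gc a b * (gic n b * F a)) = F n"
  using fun_cong[OF K4[OF assms, of "\<lambda>b _. F b"], of "[]"] by (simp add: sum_fun_apply mult.assoc)
lemma sKtr: "(\<Sum>a\<le>s. \<Sum>b\<le>s. gc a b * (gic a b * z)) = of_nat (s + 1) * z"
  using fun_cong[OF Ktr[of "\<lambda>_. z"], of "[]"] by (simp add: sum_fun_apply mult.assoc)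
lemma sKtr': "(\<Sum>a\<le>s. \<Sum>b\<le>s. gc a b * (z * gic a b)) = of_nat (s + 1) * z"
  using sKtr[of z] by (simp add: mult.commute)

lemma rel_eq: "rel s G Gi l m n = mono [l, m, n] - R l m n"
  unfolding rel_def R_def by (simp add: ncmult_add_left ncmult_diff_left ncmult_scale_left theta_def mono_mult)

lemma X_expand: "X k = (\<Sum>y\<le>s. \<Sum>z\<le>s. cscale (gc y z) (mono [k, y, z]))"
  by (simp add: gel_def ncmult_sum_right ncmult_scale_right theta_def mono_mult)
lemma M_expand: "M x k = (\<Sum>c\<le>s. \<Sum>d\<le>s. cscale (gc c d) (mono [x, k, c, d]))"
  by (simp add: gel_def ncmult_sum_right ncmult_scale_right theta_def mono_mult)
lemma N_expand: "N k x = (\<Sum>b\<le>s. \<Sum>c\<le>s. cscale (gc b c) (mono [k, b, c, x]))"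
  by (simp add: gel_def ncmult_sum_right ncmult_scale_right ncmult_sum_left ncmult_scale_left theta_def mono_mult)


definition a3 :: "nat \<Rightarrow> nat list \<Rightarrow> complex" where
  "a3 j w = (case w of [x, y, z] \<Rightarrow> (1 / of_nat s) * (gic x y * dl z j + gic y z * dl x j - 2 * (gic x z * dl y j)) | _ \<Rightarrow> 0)"

lemma a3_X: assumes k: "k \<le> s" and j: "j \<le> s"
  shows "wfun (words s 3) (a3 j) (X k) = dl k j"
proof -
  have "wfun (words s 3) (a3 j) (X k) = (\<Sum>y\<le>s. \<Sum>z\<le>s. gc y z * a3 j [k, y, z])"
    unfolding X_expand wfun_dsum using k by (intro sum.cong refl) (simp add: wfun_mono_words words_mem)
  also have "\<dots> = (\<Sum>y\<le>s. \<Sum>z\<le>s. gc y z * ((1 / of_nat s) * (gic k y * dl z j + gic y z * dl k j - 2 * (gic k z * dl y j))))"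
    by (simp add: a3_def)
  also have "\<dots> = (1 / of_nat s) * (dl k j + of_nat (s + 1) * dl k j - 2 * dl k j)"
    by (simp only: sdistR sK3[OF k] sKtr sK4[OF k])
  also have "\<dots> = dl k j" using sN by (simp add: dl_def field_simps)
  finally show ?thesis .
qed

lemma span_R: "l \<le> s \<Longrightarrow> m \<le> s \<Longrightarrow> n \<le> s \<Longrightarrow> R l m n \<in> nc.span ((\<lambda>k. X k) ` {..s})"
  unfolding R_def by (intro nc.span_scale nc.span_add nc.span_diff nc.span_base) auto

lemma wfun_R: "wfun W a (R l m n) = (1 / of_nat s) * (gic l m * wfun W a (X n) + gic m n * wfun W a (X l) - 2 * gic l n * wfun W a (X m))"
  unfolding R_def by (simp add: wfun_scale wfun_add wfun_diff)

lemma basis3: "basis_mod s G Gi 3 {..s} (\<lambda>l. theta l ** gel s G)"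
  unfolding basis_mod_def
proof (intro conjI)
  show "finite {..s}" by simp
  show h: "(\<lambda>l. theta l ** gel s G) ` {..s} \<subseteq> homog s 3"
    using homog_mult[OF theta_homog gel_homog] by (auto simp: numeral_3_eq_3)
  show "homog s 3 \<subseteq> nc.span ((\<lambda>l. theta l ** gel s G) ` {..s} \<union> (relideal s G Gi \<inter> homog s 3))"
  proof (rule span_helper[OF h])
    fix w assume "w \<in> words s 3"
    then obtain l m n where w: "w = [l, m, n]" "l \<le> s" "m \<le> s" "n \<le> s"
      by (auto simp: words_def length_Suc_conv numeral_3_eq_3)
    have "mono w = theta l ** theta m ** theta n" unfolding w by (simp add: theta_def mono_mult)
    then have "mono w - R l m n \<in> relideal s G Gi" using R0[OF w(2-4)] unfolding cg_def by simp
    then show "\<exists>x\<in>nc.span ((\<lambda>l. theta l ** gel s G) ` {..s}). mono w - x \<in> relideal s G Gi"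
      using span_R[OF w(2-4)] by blast
  qed
  show "\<forall>c. (\<Sum>i\<in>{..s}. cscale (c i) (theta i ** gel s G)) \<in> relideal s G Gi \<longrightarrow> (\<forall>i\<in>{..s}. c i = 0)"
  proof (rule indep_functionals[where n = 3])
    fix j assume j: "j \<in> {..s}"
    show "\<exists>W a. W \<subseteq> words s 3 \<and> (\<forall>x. x \<in> gens s G Gi \<longrightarrow> x \<in> homog s 3 \<longrightarrow> wfun W a x = 0)
        \<and> (\<forall>i\<in>{..s}. wfun W a (theta i ** gel s G) = (if i = j then 1 else 0))"
    proof (intro exI[of _ "words s 3"] exI[of _ "a3 j"] conjI)
      show "\<forall>i\<in>{..s}. wfun (words s 3) (a3 j) (theta i ** gel s G) = (if i = j then 1 else 0)"
        using j by (auto simp: a3_X dl_def)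
      show "\<forall>x. x \<in> gens s G Gi \<longrightarrow> x \<in> homog s 3 \<longrightarrow> wfun (words s 3) (a3 j) x = 0"
      proof (intro allI impI)
        fix x assume x: "x \<in> gens s G Gi" "x \<in> homog s 3"
        show "wfun (words s 3) (a3 j) x = 0"
        proof (cases "x = 0")
          case True then show ?thesis by (simp add: wfun_zero)
        next
          case False
          then obtain u v l m n where xe: "x = mono u ** rel s G Gi l m n ** mono v"
            and h: "l \<le> s" "m \<le> s" "n \<le> s" "length u + 3 + length v = 3"
            using gens_deg[OF x] by blast
          then have "x = rel s G Gi l m n" by (simp add: ncone_left ncone_right)
          then show ?thesis using h j
            by (simp add: rel_eq wfun_diff wfun_R a3_X wfun_mono_words words_mem a3_def dl_def)
        qed
      qed
    qed simp
  qed simp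
qed

definition T where "T a b c d = gic a b * gic c d + gic a d * gic b c - 2 * (gic a c * gic b d)"
definition a4 :: "nat list \<Rightarrow> complex" where
  "a4 w = (case w of [a, b, c, d] \<Rightarrow> T a b c d / (of_nat s * of_nat (s + 1)) | _ \<Rightarrow> 0)"

lemma a4_M: assumes x: "x \<le> s" and k: "k \<le> s"
  shows "wfun (words s 4) a4 (M x k) = gic x k / of_nat (s + 1)"
proof -
  have "wfun (words s 4) a4 (M x k) = (\<Sum>c\<le>s. \<Sum>d\<le>s. gc c d * (T x k c d / (of_nat s * of_nat (s + 1))))"
    unfolding M_expand wfun_dsum using x k by (intro sum.cong refl) (simp add: wfun_mono_words words_mem a4_def)
  also have "\<dots> = (\<Sum>c\<le>s. \<Sum>d\<le>s. gc c d * T x k c d) / (of_nat s * of_nat (s + 1))"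
    by (simp add: sum_divide_distrib)
  also have "(\<Sum>c\<le>s. \<Sum>d\<le>s. gc c d * T x k c d) = of_nat (s + 1) * gic x k + gic k x - 2 * gic k x"
    unfolding T_def by (simp only: sdist3 sKtr' sK4[OF x] sK3[OF x])
  also have "\<dots> = of_nat s * gic x k" using gic_sym[OF x k] by (simp add: algebra_simps)
  finally show ?thesis using sN by simp
qed

lemma a4_N: assumes k: "k \<le> s" and x: "x \<le> s"
  shows "wfun (words s 4) a4 (N k x) = gic k x / of_nat (s + 1)"
proof -
  have "wfun (words s 4) a4 (N k x) = (\<Sum>b\<le>s. \<Sum>c\<le>s. gc b c * (T k b c x / (of_nat s * of_nat (s + 1))))"
    unfolding N_expand wfun_dsum using x k by (intro sum.cong refl) (simp add: wfun_mono_words words_mem a4_def)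
  also have "\<dots> = (\<Sum>b\<le>s. \<Sum>c\<le>s. gc b c * T k b c x) / (of_nat s * of_nat (s + 1))"
    by (simp add: sum_divide_distrib)
  also have "(\<Sum>b\<le>s. \<Sum>c\<le>s. gc b c * T k b c x) = gic k x + of_nat (s + 1) * gic k x - 2 * gic k x"
    unfolding T_def by (simp only: sdist3 sKtr' sK4[OF k] sK3[OF k])
  also have "\<dots> = of_nat s * gic k x" by (simp add: algebra_simps)
  finally show ?thesis using sN by simp
qed

lemma a4_mm: "wfun (words s 4) a4 mm = 1"
proof -
  have "wfun (words s 4) a4 mm = (\<Sum>a\<le>s. \<Sum>b\<le>s. gc a b * (gic a b * (1 / of_nat (s + 1))))"
    unfolding S3[symmetric] wfun_dsum by (intro sum.cong refl) (simp add: a4_M)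
  also have "\<dots> = 1" using sN1 by (simp only: sKtr) simp
  finally show ?thesis .
qed


lemma thR: "theta x ** R l m n = cscale (1 / of_nat s) (cscale (gic l m) (M x n) + cscale (gic m n) (M x l) - cscale (2 * gic l n) (M x m))"
  by (simp only: R_def ncmult_add_right ncmult_diff_right ncmult_scale_right ncmult_assoc[symmetric])

lemma Rth: "R l m n ** theta x = cscale (1 / of_nat s) (cscale (gic l m) (N n x) + cscale (gic m n) (N l x) - cscale (2 * gic l n) (N m x))"
  by (simp only: R_def ncmult_add_left ncmult_diff_left ncmult_scale_left)

lemma T_cancel: "T a b c d / (of_nat s * of_nat (s + 1)) - (1 / of_nat s) * (e / of_nat (s + 1)) = 0"
  if "T a b c d = e" for e
  using that by simp

lemma basis4: "basis_mod s G Gi 4 {()} (\<lambda>_. gel s G ** gel s G)"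
  unfolding basis_mod_def
proof (intro conjI)
  show "finite {()}" by simp
  show h: "(\<lambda>_. gel s G ** gel s G) ` {()} \<subseteq> homog s 4"
    using homog_mult[OF gel_homog gel_homog] by auto
  show "homog s 4 \<subseteq> nc.span ((\<lambda>_. gel s G ** gel s G) ` {()} \<union> (relideal s G Gi \<inter> homog s 4))"
  proof (rule span_helper[OF h])
    fix w assume "w \<in> words s 4"
    then obtain a b c d where w: "w = [a, b, c, d]" "a \<le> s" "b \<le> s" "c \<le> s" "d \<le> s"
      by (auto simp: words_def length_Suc_conv numeral_eq_Suc)
    obtain \<kappa> where k: "cg (theta a ** theta b ** theta c ** theta d) (cscale \<kappa> mm)"
      using S7[OF w(2-5)] by blast
    have "mono w = theta a ** theta b ** theta c ** theta d" unfolding w by (simp add: theta_def mono_mult)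
    then have "mono w - cscale \<kappa> mm \<in> relideal s G Gi" using k unfolding cg_def by simp
    moreover have "cscale \<kappa> mm \<in> nc.span ((\<lambda>_. gel s G ** gel s G) ` {()})"
      by (intro nc.span_scale nc.span_base) auto
    ultimately show "\<exists>x\<in>nc.span ((\<lambda>_. gel s G ** gel s G) ` {()}). mono w - x \<in> relideal s G Gi"
      by blast
  qed
  show "\<forall>c. (\<Sum>i\<in>{()}. cscale (c i) (gel s G ** gel s G)) \<in> relideal s G Gi \<longrightarrow> (\<forall>i\<in>{()}. c i = 0)"
  proof (rule indep_functionals[where n = 4])
    fix j :: unit
    show "\<exists>W a. W \<subseteq> words s 4 \<and> (\<forall>x. x \<in> gens s G Gi \<longrightarrow> x \<in> homog s 4 \<longrightarrow> wfun W a x = 0)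
        \<and> (\<forall>i\<in>{()}. wfun W a (gel s G ** gel s G) = (if i = j then 1 else 0))"
    proof (intro exI[of _ "words s 4"] exI[of _ a4] conjI)
      show "\<forall>i\<in>{()}. wfun (words s 4) a4 (gel s G ** gel s G) = (if i = j then 1 else 0)"
        by (simp add: a4_mm)
      show "\<forall>x. x \<in> gens s G Gi \<longrightarrow> x \<in> homog s 4 \<longrightarrow> wfun (words s 4) a4 x = 0"
      proof (intro allI impI)
        fix x assume x: "x \<in> gens s G Gi" "x \<in> homog s 4"
        show "wfun (words s 4) a4 x = 0"
        proof (cases "x = 0")
          case True then show ?thesis by (simp add: wfun_zero)
        next
          case False
          then obtain u v l m n where xe: "x = mono u ** rel s G Gi l m n ** mono v"
            and h: "set u \<subseteq> {..s}" "set v \<subseteq> {..s}" "l \<le> s" "m \<le> s" "n \<le> s" "length u + 3 + length v = 4"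
            using gens_deg[OF x] by blast
          have "length u + length v = 1" using h(6) by simp
          then consider (L) y where "u = [y]" "v = []" | (Rt) y where "u = []" "v = [y]"
            by (cases u; cases v) auto
          then show ?thesis
          proof cases
            case L
            then have y: "y \<le> s" using h by simp
            have xe': "x = mono [y, l, m, n] - theta y ** R l m n"
              unfolding xe L by (simp add: ncone_right rel_eq ncmult_diff_right mono_mult theta_def)
            have e: "T y l m n = gic l m * gic y n + gic m n * gic y l - 2 * gic l n * gic y m"
              unfolding T_def by (simp add: algebra_simps)
            show ?thesis unfolding xe' thR
              using h y T_cancel[OF e]
              by (simp add: wfun_diff wfun_scale wfun_add wfun_mono_words words_mem a4_def a4_M diff_divide_distrib add_divide_distrib)
          next
            case Rt
            then have y: "y \<le> s" using h by simp
            have xe': "x = mono [l, m, n, y] - R l m n ** theta y"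
              unfolding xe Rt by (simp add: ncone_left rel_eq ncmult_diff_left mono_mult theta_def)
            have e: "T l m n y = gic l m * gic n y + gic m n * gic l y - 2 * gic l n * gic m y"
              unfolding T_def by (simp add: algebra_simps)
            show ?thesis unfolding xe' Rth
              using h y T_cancel[OF e]
              by (simp add: wfun_diff wfun_scale wfun_add wfun_mono_words words_mem a4_def a4_N diff_divide_distrib add_divide_distrib)
          qed
        qed
      qed
    qed simp
  qed simp
qed

end


theorem proposition1:
  fixes s :: nat and G Gi :: "nat \<Rightarrow> nat \<Rightarrow> real"
  assumes "s \<ge> 1"
    and "\<forall>\<mu>\<le>s. \<forall>\<nu>\<le>s. G \<mu> \<nu> = G \<nu> \<mu>"
    and "\<forall>\<mu>\<le>s. \<forall>\<nu>\<le>s. (\<Sum>\<alpha>\<le>s. G \<mu> \<alpha> * Gi \<alpha> \<nu>) = (if \<mu> = \<nu> then 1 else 0)"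
    and "\<forall>\<mu>\<le>s. \<forall>\<nu>\<le>s. (\<Sum>\<alpha>\<le>s. Gi \<mu> \<alpha> * G \<alpha> \<nu>) = (if \<mu> = \<nu> then 1 else 0)"
  shows "basis_mod s G Gi 0 {()} (\<lambda>_. ncone)
    \<and> basis_mod s G Gi 1 {..s} theta
    \<and> basis_mod s G Gi 2 ({..s} \<times> {..s}) (\<lambda>(\<mu>, \<nu>). theta \<mu> ** theta \<nu>)
    \<and> basis_mod s G Gi 3 {..s} (\<lambda>l. theta l ** gel s G)
    \<and> basis_mod s G Gi 4 {()} (\<lambda>_. gel s G ** gel s G)
    \<and> (\<forall>n\<ge>5. homog s n \<subseteq> relideal s G Gi)
    \<and> dimA s G Gi 0 = 1 \<and> dimA s G Gi 4 = 1
    \<and> dimA s G Gi 1 = s + 1 \<and> dimA s G Gi 3 = s + 1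
    \<and> dimA s G Gi 2 = (s + 1)^2"
proof -
  interpret c: ctx s G Gi
    by unfold_locales (rule assms)+
  have b0: "basis_mod s G Gi 0 {()} (\<lambda>_. ncone)" by (rule basis0)
  have b1: "basis_mod s G Gi 1 {..s} theta" by (rule basis1)
  have b2: "basis_mod s G Gi 2 ({..s} \<times> {..s}) (\<lambda>(\<mu>, \<nu>). theta \<mu> ** theta \<nu>)" by (rule basis2)
  have b3: "basis_mod s G Gi 3 {..s} (\<lambda>l. theta l ** gel s G)" by (rule c.basis3)
  have b4: "basis_mod s G Gi 4 {()} (\<lambda>_. gel s G ** gel s G)" by (rule c.basis4)
  have h5: "\<forall>n\<ge>5. homog s n \<subseteq> relideal s G Gi" using c.S10 by blast
  show ?thesis
    using b0 b1 b2 b3 b4 h5 dimA_card[OF b0] dimA_card[OF b1] dimA_card[OF b2] dimA_card[OF b3] dimA_card[OF b4]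
    by (simp add: card_cartesian_product power2_eq_square)
qed

end
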